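(* Consider the networked SIR epidemic-opinion model described in the context, under the standing assumption stated there. Every equilibrium $(s_e,x_e,o_e)\in[0,1]^{3n}$ of the model has the form $(s_e,\mathbf 0,(\bar L+I_n)^{-1}(\mathbf 1_n-s_e))$ with $s_e\in[0,1]^n$; conversely, for every $s_e\in[0,1]^n$ the point $(s_e,\mathbf 0,(\bar L+I_n)^{-1}(\mathbf 1_n-s_e))$ is an equilibrium, and $[(\bar L+I_n)^{-1}(\mathbf 1_n-s_e)]_i\in[0,1]$ for all $i\in[n]$.
   Context: There are $n$ communities. For $t\ge0$ and $i\in[n]$, $s_i(t),x_i(t),o_i(t)\in[0,1]$ denote the susceptible proportion, infected proportion and opinion of community $i$. The disease transmission network is a directed graph $\mathcal G=(\mathcal V,\mathcal E)$ on $n$ nodes with edge weights $\beta_{ij}>0$ if $(v_j,v_i)\in\mathcal E$ (and $\beta_{ij}=0$ otherwise); $\mathcal N_i=\{v_j:(v_j,v_i)\in\mathcal E\}$. The opinion network is a directed graph $\bar{\mathcal G}$ on the same nodes with nonnegative weights $\bar a_{ij}$ and Laplacian $\bar L=\mathrm{diag}(k_1,\dots,k_n)-\bar A$, where $[\bar A]_{ij}=\bar a_{ij}$ and $k_i=\sum_j \bar a_{ij}$. Parameters: $\beta_{\min}>0$, $\gamma_{\min}>0$, recovery rates $\gamma_i$. The model is $\dot s_i=-s_i\sum_{j\in\mathcal N_i}\big(\beta_{ij}-(\beta_{ij}-\beta_{\min})o_i\big)x_j$, $\dot x_i=s_i\sum_{j\in\mathcal N_i}\big(\beta_{ij}-(\beta_{ij}-\beta_{\min})o_i\big)x_j-\big(\gamma_{\min}+(\gamma_i-\gamma_{\min})o_i\big)x_i$,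 $\dot o=(\mathbf 1_n-s)-(\bar L+I_n)o$. Standing assumption: $\gamma_i\ge\gamma_{\min}>0$, $\beta_{ij}\ge\beta_{\min}>0$ for all $j\in\mathcal N_i$, and both $\mathcal G$ and $\bar{\mathcal G}$ are strongly connected. *)

theory Defs
  imports "HOL-Analysis.Analysis"
begin

text \<open>Communities are indexed by a finite type 'n (so n = CARD('n)).
  Disease network: beta i j > 0 iff (v_j, v_i) is an edge; N_i = {j. beta i j > 0}.
  Opinion network: weights abar i j >= 0, edge (v_j, v_i) iff abar i j > 0.\<close>

definition strongly_connected :: "('n \<Rightarrow> 'n \<Rightarrow> bool) \<Rightarrow> bool" where
  "strongly_connected E \<longleftrightarrow> (\<forall>u v. (u, v) \<in> {(a, b). E a b}\<^sup>*)"

definition nbrs :: "('n \<Rightarrow> 'n \<Rightarrow> real) \<Rightarrow> 'n \<Rightarrow> 'n set" where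
  "nbrs beta i = {j. beta i j > 0}"

definition unit_box :: "(real ^ 'n) set" where
  "unit_box = {v. \<forall>i. 0 \<le> v $ i \<and> v $ i \<le> 1}"

definition laplacian :: "('n::finite \<Rightarrow> 'n \<Rightarrow> real) \<Rightarrow> real ^ 'n ^ 'n" where
  "laplacian a = (\<chi> i j. (if i = j then (\<Sum>k\<in>UNIV. a i k) else 0) - a i j)"

definition infection_force ::
  "('n::finite \<Rightarrow> 'n \<Rightarrow> real) \<Rightarrow> real \<Rightarrow> real ^ 'n \<Rightarrow> real ^ 'n \<Rightarrow> 'n \<Rightarrow> real" where
  "infection_force beta bmin x op i =
     (\<Sum>j\<in>nbrs beta i. (beta i j - (beta i j - bmin) * op $ i) * x $ j)"

definition s_dot ::
  "('n::finite \<Rightarrow> 'n \<Rightarrow> real) \<Rightarrow> real \<Rightarrow> real ^ 'n \<Rightarrow> real ^ 'n \<Rightarrow> real ^ 'n \<Rightarrow> real ^ 'n" where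
  "s_dot beta bmin s x op = (\<chi> i. - s $ i * infection_force beta bmin x op i)"

definition x_dot ::
  "('n::finite \<Rightarrow> 'n \<Rightarrow> real) \<Rightarrow> real \<Rightarrow> ('n \<Rightarrow> real) \<Rightarrow> real
     \<Rightarrow> real ^ 'n \<Rightarrow> real ^ 'n \<Rightarrow> real ^ 'n \<Rightarrow> real ^ 'n" where
  "x_dot beta bmin gamma gmin s x op = (\<chi> i. s $ i * infection_force beta bmin x op i
       - (gmin + (gamma i - gmin) * op $ i) * x $ i)"

definition o_dot ::
  "('n::finite \<Rightarrow> 'n \<Rightarrow> real) \<Rightarrow> real ^ 'n \<Rightarrow> real ^ 'n \<Rightarrow> real ^ 'n" where
  "o_dot abar s op = (1 - s) - (laplacian abar + mat 1) *v op"

definition is_equilibrium ::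
  "('n::finite \<Rightarrow> 'n \<Rightarrow> real) \<Rightarrow> real \<Rightarrow> ('n \<Rightarrow> real) \<Rightarrow> real \<Rightarrow> ('n \<Rightarrow> 'n \<Rightarrow> real)
     \<Rightarrow> real ^ 'n \<Rightarrow> real ^ 'n \<Rightarrow> real ^ 'n \<Rightarrow> bool" where
  "is_equilibrium beta bmin gamma gmin abar s x op \<longleftrightarrow>
     s_dot beta bmin s x op = 0 \<and> x_dot beta bmin gamma gmin s x op = 0 \<and> o_dot abar s op = 0"

end

theory Submission
  imports Defs
begin

lemma Mv:
  fixes abar :: "'n::finite \<Rightarrow> 'n \<Rightarrow> real"
  shows "((laplacian abar + mat 1) *v v) $ i = v $ i + (\<Sum>k\<in>UNIV. abar i k * (v $ i - v $ k))"
proof -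
  have "((laplacian abar + mat 1) *v v) $ i
     = (\<Sum>j\<in>UNIV. ((if i = j then (\<Sum>k\<in>UNIV. abar i k) else 0) - abar i j + (if i = j then 1 else 0)) * v $ j)"
    by (simp add: matrix_vector_mult_def laplacian_def mat_def)
  also have "\<dots> = (\<Sum>j\<in>UNIV. (if i = j then ((\<Sum>k\<in>UNIV. abar i k) + 1) * v $ j else 0)) - (\<Sum>j\<in>UNIV. abar i j * v $ j)"
    by (simp only: sum_subtractf[symmetric], rule sum.cong, auto simp: algebra_simps)
  also have "\<dots> = ((\<Sum>k\<in>UNIV. abar i k) + 1) * v $ i - (\<Sum>j\<in>UNIV. abar i j * v $ j)"
    by simp
  also have "\<dots> = v $ i + (\<Sum>k\<in>UNIV. abar i k * (v $ i - v $ k))"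
    by (simp add: algebra_simps sum_subtractf sum_distrib_right sum_distrib_left)
  finally show ?thesis .
qed

lemma ex_max:
  fixes v :: "real ^ 'n::finite"
  shows "\<exists>i. \<forall>k. v $ k \<le> v $ i"
proof -
  have "finite (range (\<lambda>k. v $ k))" by simp
  then have "Max (range (\<lambda>k. v $ k)) \<in> range (\<lambda>k. v $ k)" by (intro Max_in) auto
  then obtain i where "Max (range (\<lambda>k. v $ k)) = v $ i" by blast
  then show ?thesis using Max_ge[OF \<open>finite _\<close>] by (metis rangeI)
qed

lemma ex_min:
  fixes v :: "real ^ 'n::finite"
  shows "\<exists>i. \<forall>k. v $ i \<le> v $ k"
proof -
  have "finite (range (\<lambda>k. v $ k))" by simp
  then have "Min (range (\<lambda>k. v $ k)) \<in> range (\<lambda>k. v $ k)" by (intro Min_in) auto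
  then obtain i where "Min (range (\<lambda>k. v $ k)) = v $ i" by blast
  then show ?thesis using Min_le[OF \<open>finite _\<close>] by (metis rangeI)
qed

lemma upper:
  fixes abar :: "'n::finite \<Rightarrow> 'n \<Rightarrow> real"
  assumes nn: "\<forall>i j. abar i j \<ge> 0" and b: "\<forall>j. ((laplacian abar + mat 1) *v v) $ j \<le> c"
  shows "v $ k \<le> c"
proof -
  obtain i where i: "\<forall>k. v $ k \<le> v $ i" using ex_max by blast
  have "0 \<le> (\<Sum>k\<in>UNIV. abar i k * (v $ i - v $ k))"
    using nn i by (intro sum_nonneg) simp
  then have "v $ i \<le> c" using b[rule_format, of i] Mv[of abar v i] by linarith
  then show ?thesis using i by (meson order_trans)
qed

lemma lower:
  fixes abar :: "'n::finite \<Rightarrow> 'n \<Rightarrow> real"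
  assumes nn: "\<forall>i j. abar i j \<ge> 0" and b: "\<forall>j. ((laplacian abar + mat 1) *v v) $ j \<ge> c"
  shows "v $ k \<ge> c"
proof -
  obtain i where i: "\<forall>k. v $ i \<le> v $ k" using ex_min by blast
  have "(\<Sum>k\<in>UNIV. abar i k * (v $ i - v $ k)) \<le> 0"
    using nn i by (intro sum_nonpos) (simp add: mult_nonneg_nonpos)
  then have "c \<le> v $ i" using b[rule_format, of i] Mv[of abar v i] by linarith
  then show ?thesis using i by (meson order_trans)
qed

theorem lemma3:
  fixes beta :: "'n::finite \<Rightarrow> 'n \<Rightarrow> real" and abar :: "'n \<Rightarrow> 'n \<Rightarrow> real"
    and gamma :: "'n \<Rightarrow> real" and bmin gmin :: real
  assumes bmin_pos: "bmin > 0" and gmin_pos: "gmin > 0"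
    and gamma_ge: "\<forall>i. gamma i \<ge> gmin"
    and beta_nonneg: "\<forall>i j. beta i j \<ge> 0"
    and beta_ge: "\<forall>i. \<forall>j\<in>nbrs beta i. beta i j \<ge> bmin"
    and abar_nonneg: "\<forall>i j. abar i j \<ge> 0"
    and G_sc: "strongly_connected (\<lambda>j i. beta i j > 0)"
    and Gbar_sc: "strongly_connected (\<lambda>j i. abar i j > 0)"
  shows "invertible (laplacian abar + mat 1)
    \<and> (\<forall>s\<in>unit_box. \<forall>x\<in>unit_box. \<forall>op\<in>unit_box.
          is_equilibrium beta bmin gamma gmin abar s x op \<longrightarrow>
          x = 0 \<and> op = matrix_inv (laplacian abar + mat 1) *v (1 - s))
    \<and> (\<forall>s\<in>unit_box.
          is_equilibrium beta bmin gamma gmin abar s 0 (matrix_inv (laplacian abar + mat 1) *v (1 - s))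
          \<and> (\<forall>i. (matrix_inv (laplacian abar + mat 1) *v (1 - s)) $ i \<in> {0..1}))"
proof -
  define M where "M = laplacian abar + mat 1"
  have ker: "\<forall>v. M *v v = 0 \<longrightarrow> v = 0"
  proof (intro allI impI)
    fix v assume "M *v v = 0"
    then have "\<forall>j. (M *v v) $ j \<le> 0" "\<forall>j. (M *v v) $ j \<ge> 0" by auto
    then have "v $ k \<le> 0 \<and> v $ k \<ge> 0" for k
      using upper[OF abar_nonneg] lower[OF abar_nonneg] unfolding M_def by blast
    then show "v = 0" by (simp add: vec_eq_iff antisym)
  qed
  have inv: "invertible M"
    using ker by (simp add: invertible_left_inverse matrix_left_invertible_ker)
  have MMi: "M ** matrix_inv M = mat 1"
    using inv unfolding invertible_def matrix_inv_def by (metis (mono_tags, lifting) someI_ex)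
  have MiM: "matrix_inv M ** M = mat 1"
    using inv unfolding invertible_def matrix_inv_def by (metis (mono_tags, lifting) someI_ex)
  have solve: "M *v (matrix_inv M *v b) = b" for b
    by (simp add: matrix_vector_mul_assoc MMi)
  have part2: "x = 0 \<and> op = matrix_inv M *v (1 - s)"
    if s: "s \<in> unit_box" and x: "x \<in> unit_box" and op: "op \<in> unit_box"
      and eq: "is_equilibrium beta bmin gamma gmin abar s x op" for s x op
  proof
    have sd: "s $ i * infection_force beta bmin x op i = 0" for i
      using eq unfolding is_equilibrium_def s_dot_def by (simp add: vec_eq_iff)
    have xd: "s $ i * infection_force beta bmin x op i - (gmin + (gamma i - gmin) * op $ i) * x $ i = 0" for i
      using eq unfolding is_equilibrium_def x_dot_def by (simp add: vec_eq_iff)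
    have pos: "gmin + (gamma i - gmin) * op $ i > 0" for i
    proof -
      have "0 \<le> (gamma i - gmin) * op $ i" using gamma_ge op unfolding unit_box_def by simp
      then show ?thesis using gmin_pos by linarith
    qed
    show "x = 0"
    proof (subst vec_eq_iff, intro allI)
      fix i
      have "(gmin + (gamma i - gmin) * op $ i) * x $ i = 0" using sd[of i] xd[of i] by linarith
      then show "x $ i = 0 $ i" using pos[of i] by simp
    qed
    have "M *v op = 1 - s" using eq unfolding is_equilibrium_def o_dot_def M_def by simp
    then have "matrix_inv M *v (M *v op) = matrix_inv M *v (1 - s)" by simp
    then show "op = matrix_inv M *v (1 - s)" by (simp add: matrix_vector_mul_assoc MiM)
  qed
  have part3: "is_equilibrium beta bmin gamma gmin abar s 0 (matrix_inv M *v (1 - s))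
          \<and> (\<forall>i. (matrix_inv M *v (1 - s)) $ i \<in> {0..1})" if s: "s \<in> unit_box" for s
  proof
    show "is_equilibrium beta bmin gamma gmin abar s 0 (matrix_inv M *v (1 - s))"
      unfolding is_equilibrium_def s_dot_def x_dot_def o_dot_def infection_force_def
      using solve[of "1 - s"] by (simp add: M_def vec_eq_iff)
    have b: "\<forall>j. (M *v (matrix_inv M *v (1 - s))) $ j \<le> 1"
            "\<forall>j. (M *v (matrix_inv M *v (1 - s))) $ j \<ge> 0"
      using s unfolding solve unit_box_def by auto
    show "\<forall>i. (matrix_inv M *v (1 - s)) $ i \<in> {0..1}"
      using upper[OF abar_nonneg b(1)[unfolded M_def]] lower[OF abar_nonneg b(2)[unfolded M_def]]
      by (auto simp: M_def)
  qed
  show ?thesis using inv part2 part3 unfolding M_def by blast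
qed

end
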